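(* Let $Y$ be a real Banach lattice. The following conditions are equivalent: 1) $Y$ is uniformly monotone. 2) For every $0<\varepsilon<1$ there is $\eta(\varepsilon)>0$ such that whenever $u\in Y$, $v\in Y$ with $\Vert v\Vert=1$, $0\le u\le v$ and $\Vert v-u\Vert>1-\eta(\varepsilon)$, then $\Vert u\Vert\le\varepsilon$. 3) For every $0<\varepsilon<1$ there is $\eta(\varepsilon)>0$ such that whenever $u,v\in Y$ with $0\le u\le v$ and $\Vert v-u\Vert>(1-\eta(\varepsilon))\Vert v\Vert$, then $\Vert u\Vert\le\varepsilon\Vert v\Vert$. Moreover, if 2) holds with $\eta$, then $Y$ is uniformly monotone with $\delta(\varepsilon)=\eta(\varepsilon/2)$; and if $Y$ is uniformly monotone with $\delta(\varepsilon)$, then conditions 2) and 3) hold with $\eta(\varepsilon)=\frac{\delta(\varepsilon)}{1+\delta(\varepsilon)}$.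
   Context: A Banach lattice $E$ is uniformly monotone if for every $\varepsilon>0$ there is $\delta(\varepsilon)>0$ such that whenever $x\in E$ with $\Vert x\Vert=1$, $y\in E$, $x,y\ge0$, and $\Vert x+y\Vert\le 1+\delta(\varepsilon)$, then $\Vert y\Vert\le\varepsilon$; we then say $E$ is uniformly monotone with $\delta$. *)

theory Defs
  imports "HOL-Analysis.Analysis"
begin

class banach_lattice = banach + ordered_real_vector + lattice +
  assumes lattice_norm: "sup x (- x) \<le> sup y (- y) \<Longrightarrow> norm x \<le> norm y"

definition um_prop :: "'a::banach_lattice itself \<Rightarrow> real \<Rightarrow> real \<Rightarrow> bool" where
  "um_prop Y \<epsilon> d \<longleftrightarrow> d > 0 \<and>
     (\<forall>x y::'a. norm x = 1 \<and> 0 \<le> x \<and> 0 \<le> y \<and> norm (x + y) \<le> 1 + d \<longrightarrow> norm y \<le> \<epsilon>)"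

definition uniformly_monotone_with :: "'a::banach_lattice itself \<Rightarrow> (real \<Rightarrow> real) \<Rightarrow> bool" where
  "uniformly_monotone_with Y \<delta> \<longleftrightarrow> (\<forall>\<epsilon>>0. um_prop Y \<epsilon> (\<delta> \<epsilon>))"

definition uniformly_monotone :: "'a::banach_lattice itself \<Rightarrow> bool" where
  "uniformly_monotone Y \<longleftrightarrow> (\<exists>\<delta>. uniformly_monotone_with Y \<delta>)"

definition cond2_prop :: "'a::banach_lattice itself \<Rightarrow> real \<Rightarrow> real \<Rightarrow> bool" where
  "cond2_prop Y \<epsilon> e \<longleftrightarrow> e > 0 \<and>
     (\<forall>u v::'a. norm v = 1 \<and> 0 \<le> u \<and> u \<le> v \<and> norm (v - u) > 1 - e \<longrightarrow> norm u \<le> \<epsilon>)"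

definition cond2_with :: "'a::banach_lattice itself \<Rightarrow> (real \<Rightarrow> real) \<Rightarrow> bool" where
  "cond2_with Y \<eta> \<longleftrightarrow> (\<forall>\<epsilon>. 0 < \<epsilon> \<and> \<epsilon> < 1 \<longrightarrow> cond2_prop Y \<epsilon> (\<eta> \<epsilon>))"

definition cond3_prop :: "'a::banach_lattice itself \<Rightarrow> real \<Rightarrow> real \<Rightarrow> bool" where
  "cond3_prop Y \<epsilon> e \<longleftrightarrow> e > 0 \<and>
     (\<forall>u v::'a. 0 \<le> u \<and> u \<le> v \<and> norm (v - u) > (1 - e) * norm v \<longrightarrow> norm u \<le> \<epsilon> * norm v)"

definition cond3_with :: "'a::banach_lattice itself \<Rightarrow> (real \<Rightarrow> real) \<Rightarrow> bool" where
  "cond3_with Y \<eta> \<longleftrightarrow> (\<forall>\<epsilon>. 0 < \<epsilon> \<and> \<epsilon> < 1 \<longrightarrow> cond3_prop Y \<epsilon> (\<eta> \<epsilon>))"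

end

theory Submission
  imports Defs
begin

lemma bl_mono_norm:
  fixes x y :: "'a::banach_lattice"
  assumes "0 \<le> x" "x \<le> y"
  shows "norm x \<le> norm y"
proof -
  have y0: "0 \<le> y" using assms by simp
  have "sup x (-x) = x" using assms(1) by (intro sup_absorb1) (meson neg_le_0_iff_le order.trans)
  moreover have "sup y (-y) = y" using y0 by (intro sup_absorb1) (meson neg_le_0_iff_le order.trans)
  ultimately show ?thesis using assms lattice_norm[of x y] by simp
qed

lemma c2_imp_c3:
  fixes Y :: "'a::banach_lattice itself"
  assumes "cond2_prop Y \<epsilon> e"
  shows "cond3_prop Y \<epsilon> e"
  unfolding cond3_prop_def
proof (intro conjI allI impI)
  show "e > 0" using assms by (simp add: cond2_prop_def)
  fix u v :: 'a
  assume h: "0 \<le> u \<and> u \<le> v \<and> norm (v - u) > (1 - e) * norm v"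
  have vu: "norm (v - u) \<le> norm v" using h bl_mono_norm[of "v-u" v] by simp
  have nv: "norm v > 0"
  proof (rule ccontr)
    assume "\<not> norm v > 0"
    then have "norm v = 0" by simp
    then show False using h vu by simp
  qed
  define c where "c = 1 / norm v"
  have c0: "c > 0" using nv by (simp add: c_def)
  have "norm (c *\<^sub>R v) = 1" using nv by (simp add: c_def)
  moreover have "0 \<le> c *\<^sub>R u" using h c0 by (intro scaleR_nonneg_nonneg) auto
  moreover have "c *\<^sub>R u \<le> c *\<^sub>R v" using h c0 by (simp add: scaleR_left_mono)
  moreover have "norm (c *\<^sub>R v - c *\<^sub>R u) > 1 - e"
  proof -
    have "norm (c *\<^sub>R v - c *\<^sub>R u) = c * norm (v - u)" using c0
      by (metis abs_of_pos norm_scaleR scaleR_diff_right)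
    also have "\<dots> > c * ((1 - e) * norm v)" using h c0 by simp
    finally show ?thesis using nv by (simp add: c_def)
  qed
  ultimately have "norm (c *\<^sub>R u) \<le> \<epsilon>" using assms unfolding cond2_prop_def by blast
  then have "c * norm u \<le> \<epsilon>" using c0 by simp
  then show "norm u \<le> \<epsilon> * norm v" using nv by (simp add: c_def field_simps)
qed

lemma c3_imp_c2:
  fixes Y :: "'a::banach_lattice itself"
  assumes "cond3_prop Y \<epsilon> e"
  shows "cond2_prop Y \<epsilon> e"
  using assms unfolding cond2_prop_def cond3_prop_def by (metis mult.right_neutral mult_1)

lemma c2w_iff_c3w: "cond2_with Y \<eta> \<longleftrightarrow> cond3_with Y \<eta>"
  unfolding cond2_with_def cond3_with_def using c2_imp_c3 c3_imp_c2 by blast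

lemma um_imp_c2:
  fixes Y :: "'a::banach_lattice itself"
  assumes "um_prop Y \<epsilon> d"
  shows "cond2_prop Y \<epsilon> (d / (1 + d))"
  unfolding cond2_prop_def
proof (intro conjI allI impI)
  have d0: "d > 0" using assms by (simp add: um_prop_def)
  then show "d / (1 + d) > 0" by simp
  fix u v :: 'a
  assume h: "norm v = 1 \<and> 0 \<le> u \<and> u \<le> v \<and> norm (v - u) > 1 - d / (1 + d)"
  have "1 - d / (1 + d) = 1 / (1 + d)" using d0 by (simp add: field_simps)
  then have hv: "norm (v - u) > 1 / (1 + d)" using h by simp
  have p0: "norm (v - u) > 0" using hv d0 by (smt (verit) divide_pos_pos)
  define c where "c = 1 / norm (v - u)"
  have c0: "c > 0" using p0 by (simp add: c_def)
  have x1: "norm (c *\<^sub>R (v - u)) = 1" using p0 by (simp add: c_def)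
  have x0: "0 \<le> c *\<^sub>R (v - u)" using h c0 by (intro scaleR_nonneg_nonneg) auto
  have y0: "0 \<le> c *\<^sub>R u" using h c0 by (intro scaleR_nonneg_nonneg) auto
  have "c *\<^sub>R (v - u) + c *\<^sub>R u = c *\<^sub>R v" by (simp add: scaleR_diff_right)
  then have "norm (c *\<^sub>R (v - u) + c *\<^sub>R u) = c" using h c0 by simp
  also have "c \<le> 1 + d"
  proof -
    have "(1 + d) * norm (v - u) > 1" using hv d0 by (simp add: field_simps)
    then show ?thesis using p0 by (simp add: c_def field_simps)
  qed
  finally have "norm (c *\<^sub>R u) \<le> \<epsilon>" using assms x1 x0 y0 unfolding um_prop_def by blast
  then have "c * norm u \<le> \<epsilon>" using c0 by simp
  then have nu: "norm u \<le> \<epsilon> * norm (v - u)" using p0 by (simp add: c_def field_simps)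
  have "norm (v - u) \<le> norm v" using h bl_mono_norm[of "v-u" v] by simp
  moreover have "\<epsilon> \<ge> 0"
  proof -
    have "0 \<le> \<epsilon> * norm (v - u)" using nu norm_ge_zero order.trans by blast
    then show ?thesis using p0 by (simp add: zero_le_mult_iff)
  qed
  ultimately show "norm u \<le> \<epsilon>" using nu h by (smt (verit) mult_left_mono mult_cancel_left1)
qed

lemma c2_imp_um:
  fixes Y :: "'a::banach_lattice itself"
  assumes c: "cond2_prop Y (\<epsilon>/2) e" and e0: "0 < \<epsilon>" "\<epsilon> < 2"
  shows "um_prop Y \<epsilon> e"
  unfolding um_prop_def
proof (intro conjI allI impI)
  show "e > 0" using c by (simp add: cond2_prop_def)
  then have ep: "e > 0" .
  fix x y :: 'a
  assume h: "norm x = 1 \<and> 0 \<le> x \<and> 0 \<le> y \<and> norm (x + y) \<le> 1 + e"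
  have e1: "e \<le> 1"
  proof (rule ccontr)
    assume "\<not> e \<le> 1"
    then have "norm (x - x) > 1 - e" by simp
    then have "norm x \<le> \<epsilon>/2" using c h unfolding cond2_prop_def by blast
    then show False using h e0 by simp
  qed
  have s1: "norm (x + y) \<ge> 1" using h bl_mono_norm[of x "x+y"] by simp
  define n where "n = norm (x + y)"
  define c where "c = 1 / n"
  have "n \<ge> 1" using s1 by (simp add: n_def)
  then have c0: "c > 0" by (simp add: c_def)
  have "norm (c *\<^sub>R (x + y)) = 1" using \<open>n \<ge> 1\<close> c0 by (simp add: c_def n_def)
  moreover have "0 \<le> c *\<^sub>R y" using h c0 by (intro scaleR_nonneg_nonneg) auto
  moreover have "c *\<^sub>R y \<le> c *\<^sub>R (x + y)" using h c0 by (simp add: scaleR_left_mono)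
  moreover have "norm (c *\<^sub>R (x + y) - c *\<^sub>R y) > 1 - e"
  proof -
    have "c *\<^sub>R (x + y) - c *\<^sub>R y = c *\<^sub>R x" by (simp add: scaleR_add_right)
    then have eq: "norm (c *\<^sub>R (x + y) - c *\<^sub>R y) = 1 / n" using c0 h by (simp add: c_def)
    have "n \<le> 1 + e" using h by (simp add: n_def)
    have "(1 - e) * n \<le> (1 - e) * (1 + e)" using \<open>n \<le> 1 + e\<close> e1 by (simp add: mult_left_mono)
    also have "\<dots> < 1" using ep by (simp add: algebra_simps)
    finally have "(1 - e) * n < 1" .
    moreover have "n > 0" using \<open>n \<ge> 1\<close> by simp
    ultimately have "1 - e < 1 / n" by (simp add: pos_less_divide_eq)
    then show ?thesis using eq by simp
  qed
  ultimately have "norm (c *\<^sub>R y) \<le> \<epsilon>/2" using c unfolding cond2_prop_def by blast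
  then have "norm y \<le> \<epsilon>/2 * n" using c0 s1 by (simp add: c_def n_def field_simps)
  also have "\<dots> \<le> \<epsilon>/2 * 2" using h e1 e0 by (intro mult_left_mono) (auto simp: n_def)
  finally show "norm y \<le> \<epsilon>" by simp
qed

lemma um_prop_mono:
  assumes "um_prop Y \<epsilon> d" "\<epsilon> \<le> \<epsilon>'"
  shows "um_prop Y \<epsilon>' d"
  using assms unfolding um_prop_def by force

theorem proposition4p2:
  fixes Y :: "'a::banach_lattice itself"
  shows "(uniformly_monotone Y \<longleftrightarrow> (\<exists>\<eta>. cond2_with Y \<eta>))
    \<and> (uniformly_monotone Y \<longleftrightarrow> (\<exists>\<eta>. cond3_with Y \<eta>))
    \<and> (\<forall>\<eta>. cond2_with Y \<eta> \<longrightarrow>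
          (\<forall>\<epsilon>. 0 < \<epsilon> \<and> \<epsilon> < 2 \<longrightarrow> um_prop Y \<epsilon> (\<eta> (\<epsilon> / 2))))
    \<and> (\<forall>\<delta>. uniformly_monotone_with Y \<delta> \<longrightarrow>
          cond2_with Y (\<lambda>\<epsilon>. \<delta> \<epsilon> / (1 + \<delta> \<epsilon>)) \<and>
          cond3_with Y (\<lambda>\<epsilon>. \<delta> \<epsilon> / (1 + \<delta> \<epsilon>)))"
proof -
  have P3: "\<forall>\<eta>. cond2_with Y \<eta> \<longrightarrow>
          (\<forall>\<epsilon>. 0 < \<epsilon> \<and> \<epsilon> < 2 \<longrightarrow> um_prop Y \<epsilon> (\<eta> (\<epsilon> / 2)))"
  proof (intro allI impI)
    fix \<eta> :: "real \<Rightarrow> real" and \<epsilon> :: real assume "cond2_with Y \<eta>" "0 < \<epsilon> \<and> \<epsilon> < 2"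
    then show "um_prop Y \<epsilon> (\<eta> (\<epsilon> / 2))"
      unfolding cond2_with_def by (intro c2_imp_um) auto
  qed
  have P4: "\<forall>\<delta>. uniformly_monotone_with Y \<delta> \<longrightarrow>
          cond2_with Y (\<lambda>\<epsilon>. \<delta> \<epsilon> / (1 + \<delta> \<epsilon>)) \<and>
          cond3_with Y (\<lambda>\<epsilon>. \<delta> \<epsilon> / (1 + \<delta> \<epsilon>))"
  proof (intro allI impI)
    fix \<delta> assume "uniformly_monotone_with Y \<delta>"
    then have "cond2_with Y (\<lambda>\<epsilon>. \<delta> \<epsilon> / (1 + \<delta> \<epsilon>))"
      unfolding uniformly_monotone_with_def cond2_with_def using um_imp_c2 by auto
    then show "cond2_with Y (\<lambda>\<epsilon>. \<delta> \<epsilon> / (1 + \<delta> \<epsilon>)) \<and>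
          cond3_with Y (\<lambda>\<epsilon>. \<delta> \<epsilon> / (1 + \<delta> \<epsilon>))" using c2w_iff_c3w by blast
  qed
  have P1: "uniformly_monotone Y \<longleftrightarrow> (\<exists>\<eta>. cond2_with Y \<eta>)"
  proof
    assume "uniformly_monotone Y"
    then show "\<exists>\<eta>. cond2_with Y \<eta>" using P4 unfolding uniformly_monotone_def by blast
  next
    assume "\<exists>\<eta>. cond2_with Y \<eta>"
    then obtain \<eta> where h: "cond2_with Y \<eta>" by blast
    have "uniformly_monotone_with Y (\<lambda>\<epsilon>. \<eta> (min \<epsilon> 1 / 2))"
      unfolding uniformly_monotone_with_def
    proof (intro allI impI)
      fix \<epsilon> :: real assume "\<epsilon> > 0"
      then have "um_prop Y (min \<epsilon> 1) (\<eta> (min \<epsilon> 1 / 2))" using P3 h by auto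
      then show "um_prop Y \<epsilon> (\<eta> (min \<epsilon> 1 / 2))" by (rule um_prop_mono) simp
    qed
    then show "uniformly_monotone Y" unfolding uniformly_monotone_def by blast
  qed
  show ?thesis using P1 P3 P4 c2w_iff_c3w by blast
qed

end
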